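(* Let $n \ge 3$, let $t,s\ge1$ be odd and coprime, let $r\in\mathbb{Z}$ with $r^s\equiv 1 \bmod t$, and let $a,b\in\mathbb{Z}/t$ with $a^2\equiv b^2 \equiv 1 \bmod t$. Let $G = (C_t\rtimes_{(r)} C_s)\rtimes_{(a,b)} Q_{2^n}$. Then, for $m \ge 1$ odd, $G$ has a quotient isomorphic to $Q_{2^n m}$ if and only if $m \mid t$, $r\equiv 1 \bmod m$, and $Q_{2^n m}\cong C_m\rtimes_{(a,b)} Q_{2^n}$.
   Context: $C_t\rtimes_{(r)}C_s = \langle u, v\mid u^t = v^s = 1, vuv^{-1} = u^r\rangle$. $Q_{2^n} = \langle x,y\mid x^{2^{n-2}}=y^2, yxy^{-1}=x^{-1}\rangle$, and $Q_{2^n}$ acts on $C_t\rtimes_{(r)}C_s$ by $x: u\mapsto u^a, v\mapsto v$ and $y: u\mapsto u^b, v \mapsto v$; $G$ is the resulting semidirect product. Similarly $C_m\rtimes_{(a,b)}Q_{2^n}$ denotes the semidirect product in which $x$ and $y$ act on a generator of $C_m$ by raising to the powers $a$ and $b$ (read mod $m$). $Q_{4k}=\langle x,y\mid x^k=y^2,yxy^{-1}=x^{-1}\rangle$. *)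

theory Defs
  imports "HOL-Algebra.Algebra" "HOL-Number_Theory.Number_Theory"
begin

(* Generalized quaternion group Q_{4k} = <x,y | x^k = y^2, y x y^-1 = x^-1>,
   element (i,e) represents x^i y^(if e then 1 else 0), 0 <= i < 2k. *)
definition quat :: "nat \<Rightarrow> (int \<times> bool) monoid" where
  "quat k = \<lparr> carrier = {0..<2 * int k} \<times> UNIV,
     monoid.mult = (\<lambda>(i, e) (j, f).
        ((i + (if e then - j else j) + (if e \<and> f then int k else 0)) mod (2 * int k),
         e \<noteq> f)),
     one = (0, False) \<rparr>"

(* exponent by which q = x^i y^e acts on a cyclic generator: x -> a, y -> b *)
definition qchar :: "int \<Rightarrow> int \<Rightarrow> int \<times> bool \<Rightarrow> int" where
  "qchar a b q = a ^ nat (fst q) * (if snd q then b else 1)"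

(* G = (C_t \<rtimes>_(r) C_s) \<rtimes>_(a,b) Q_{2^n}; element (i,j,q) represents u^i v^j q *)
definition Ggrp :: "nat \<Rightarrow> nat \<Rightarrow> nat \<Rightarrow> int \<Rightarrow> int \<Rightarrow> int
                      \<Rightarrow> (int \<times> int \<times> (int \<times> bool)) monoid" where
  "Ggrp n t s r a b = \<lparr> carrier = {0..<int t} \<times> {0..<int s} \<times> carrier (quat (2 ^ (n - 2))),
     monoid.mult = (\<lambda>(i, j, q) (k, l, q').
        ((i + r ^ nat j * qchar a b q * k) mod int t, (j + l) mod int s,
         q \<otimes>\<^bsub>quat (2 ^ (n - 2))\<^esub> q')),
     one = (0, 0, \<one>\<^bsub>quat (2 ^ (n - 2))\<^esub>) \<rparr>"

(* C_m \<rtimes>_(a,b) Q_{2^n}; element (i,q) represents w^i q, x,y act by w -> w^a, w^b *)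
definition Csemi :: "nat \<Rightarrow> nat \<Rightarrow> int \<Rightarrow> int \<Rightarrow> (int \<times> (int \<times> bool)) monoid" where
  "Csemi m n a b = \<lparr> carrier = {0..<int m} \<times> carrier (quat (2 ^ (n - 2))),
     monoid.mult = (\<lambda>(i, q) (k, q').
        ((i + qchar a b q * k) mod int m, q \<otimes>\<^bsub>quat (2 ^ (n - 2))\<^esub> q')),
     one = (0, \<one>\<^bsub>quat (2 ^ (n - 2))\<^esub>) \<rparr>"

end

theory Submission
  imports Defs
begin


lemma quat_mult: "(i, e) \<otimes>\<^bsub>quat k\<^esub> (j, f) =
   ((i + (if e then - j else j) + (if e \<and> f then int k else 0)) mod (2 * int k), e \<noteq> f)"
  by (simp add: quat_def)

lemma quat_one: "\<one>\<^bsub>quat k\<^esub> = (0, False)"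
  by (simp add: quat_def)

lemma quat_carrier: "carrier (quat k) = {0..<2 * int k} \<times> UNIV"
  by (simp add: quat_def)

lemma L1: "((a::int) + x mod M - l) mod M = (a + x - l) mod M"
  by (metis mod_add_right_eq mod_diff_left_eq)

lemma L2: "((x::int) mod M - i + c) mod M = (x - i + c) mod M"
  by (metis mod_add_left_eq mod_diff_left_eq)

lemma quat_group: assumes "k \<ge> 1" shows "group (quat k)"
proof (rule groupI)
  fix x y assume "x \<in> carrier (quat k)" "y \<in> carrier (quat k)"
  then show "x \<otimes>\<^bsub>quat k\<^esub> y \<in> carrier (quat k)" using assms
    by (cases x; cases y) (auto simp: quat_mult quat_carrier)
next
  show "\<one>\<^bsub>quat k\<^esub> \<in> carrier (quat k)" using assms by (simp add: quat_one quat_carrier)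
next
  fix x y z assume "x \<in> carrier (quat k)" "y \<in> carrier (quat k)" "z \<in> carrier (quat k)"
  then show "(x \<otimes>\<^bsub>quat k\<^esub> y) \<otimes>\<^bsub>quat k\<^esub> z = x \<otimes>\<^bsub>quat k\<^esub> (y \<otimes>\<^bsub>quat k\<^esub> z)"
  proof -
    obtain i e j f l g where "x = (i,e)" "y = (j,f)" "z = (l,g)" by (cases x, cases y, cases z)
    then show ?thesis
      apply (simp only: quat_mult)
      apply (cases e; cases f; cases g)
      apply (simp_all add: mod_simps diff_conv_add_uminus[symmetric] del: diff_conv_add_uminus)
      apply (simp_all add: mod_simps algebra_simps)
      apply (simp_all add: L1 mod_eq_dvd_iff algebra_simps)
      done
  qed
next
  fix x assume "x \<in> carrier (quat k)"
  then show "\<one>\<^bsub>quat k\<^esub> \<otimes>\<^bsub>quat k\<^esub> x = x"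
    by (cases x) (auto simp: quat_mult quat_carrier quat_one)
next
  fix x assume x: "x \<in> carrier (quat k)"
  obtain i e where xe: "x = (i, e)" by (cases x)
  show "\<exists>y\<in>carrier (quat k). y \<otimes>\<^bsub>quat k\<^esub> x = \<one>\<^bsub>quat k\<^esub>"
  proof (cases e)
    case True
    show ?thesis
      apply (rule bexI[of _ "((i + int k) mod (2 * int k), True)"])
      using assms True xe by (auto simp: quat_mult quat_carrier quat_one L2)
  next
    case False
    show ?thesis
      apply (rule bexI[of _ "((- i) mod (2 * int k), False)"])
      using assms False xe by (auto simp: quat_mult quat_carrier quat_one mod_simps)
  qed
qed



definition pa :: "int \<Rightarrow> int \<Rightarrow> int" where "pa a i = (if even i then 1 else a)"

lemma pow_pa: assumes "[a^2 = 1] (mod M)" shows "[a ^ j = (if even j then 1 else a)] (mod M)"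
proof (induction j rule: nat_less_induct)
  case (1 j)
  show ?case
  proof (cases "j < 2")
    case True then show ?thesis by (cases j) auto
  next
    case False
    then obtain j' where j': "j = j' + 2" by (metis add.commute le_Suc_ex not_less)
    have "a ^ j = a ^ j' * a^2" unfolding j' power_add by simp
    also have "[\<dots> = (if even j' then 1 else a) * 1] (mod M)"
      using 1 j' assms by (intro cong_mult) auto
    finally show ?thesis using j' by simp
  qed
qed

lemma qchar_pa:
  assumes "[a^2 = 1] (mod M)" "fst q \<ge> 0"
  shows "[qchar a b q = pa a (fst q) * (if snd q then b else 1)] (mod M)"
proof -
  have "[a ^ nat (fst q) = pa a (fst q)] (mod M)"
    using pow_pa[OF assms(1), of "nat (fst q)"] assms(2) by (simp add: pa_def even_nat_iff)
  then show ?thesis unfolding qchar_def by (intro cong_mult) auto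
qed

lemma pa_add: assumes "[a^2 = 1] (mod M)" shows "[pa a (i + j) = pa a i * pa a j] (mod M)"
  using assms by (auto simp: pa_def power2_eq_square cong_sym)

lemma qchar_mult:
  assumes "even k" "k \<ge> 1" "[a^2 = 1] (mod M)" "[b^2 = 1] (mod M)"
    "q \<in> carrier (quat k)" "q' \<in> carrier (quat k)"
  shows "[qchar a b (q \<otimes>\<^bsub>quat k\<^esub> q') = qchar a b q * qchar a b q'] (mod M)"
proof -
  obtain i e j f where q: "q = (i, e)" and q': "q' = (j, f)" by (cases q, cases q')
  have i0: "i \<ge> 0" "j \<ge> 0" using assms(5,6) q q' by (auto simp: quat_carrier)
  define w where "w = (i + (if e then - j else j) + (if e \<and> f then int k else 0)) mod (2 * int k)"
  have qq: "q \<otimes>\<^bsub>quat k\<^esub> q' = (w, e \<noteq> f)" by (simp add: q q' quat_mult w_def)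
  have w0: "w \<ge> 0" using assms(2) by (simp add: w_def)
  have "even (2 * int k)" by simp
  have ew: "even w \<longleftrightarrow> even (i + j)"
  proof -
    have "even w \<longleftrightarrow> even (i + (if e then - j else j) + (if e \<and> f then int k else 0))"
      unfolding w_def by (rule dvd_mod_iff) simp
    also have "\<dots> \<longleftrightarrow> even (i + j)" using assms(1) by auto
    finally show ?thesis .
  qed
  have "[qchar a b (q \<otimes>\<^bsub>quat k\<^esub> q') = pa a w * (if e \<noteq> f then b else 1)] (mod M)"
    using qchar_pa[OF assms(3), of "(w, e \<noteq> f)" b] qq w0 by simp
  also have "pa a w = pa a (i + j)" using ew by (simp add: pa_def)
  also have "[pa a (i + j) * (if e \<noteq> f then b else 1) = (pa a i * pa a j) * ((if e then b else 1) * (if f then b else 1))] (mod M)"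
    apply (intro cong_mult pa_add[OF assms(3)])
    using assms(4) by (auto simp: power2_eq_square cong_sym)
  also have "(pa a i * pa a j) * ((if e then b else 1) * (if f then b else 1))
     = (pa a i * (if e then b else 1)) * (pa a j * (if f then b else 1))" by simp
  also have "[\<dots> = qchar a b q * qchar a b q'] (mod M)"
    using qchar_pa[OF assms(3), of q b] qchar_pa[OF assms(3), of q' b] i0 q q'
    by (intro cong_mult) (auto simp: cong_sym)
  finally show ?thesis .
qed



lemma assoc_fst:
  fixes i k w R1 R2 R12 t :: int
  assumes "[R12 = R1 * R2] (mod t)"
  shows "((i + R1 * k) mod t + R12 * w) mod t = (i + R1 * ((k + R2 * w) mod t)) mod t"
proof -
  have "((i + R1 * k) mod t + R12 * w) mod t = (i + R1 * k + R12 * w) mod t"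
    by (simp add: mod_add_left_eq)
  also have "\<dots> = (i + R1 * k + R1 * R2 * w) mod t"
    using assms unfolding cong_def[symmetric] by (intro cong_add cong_mult cong_refl) auto
  also have "\<dots> = (i + R1 * (k + R2 * w)) mod t" by (simp add: algebra_simps)
  also have "\<dots> = (i + R1 * ((k + R2 * w) mod t)) mod t"
    unfolding cong_def[symmetric] by (intro cong_add cong_mult cong_refl) (simp add: cong_def)
  finally show ?thesis .
qed

lemma pow_mod_s: assumes "[(r::int) ^ s = 1] (mod t)" shows "[r ^ N = r ^ (N mod s)] (mod t)"
proof -
  have "r ^ N = (r ^ s) ^ (N div s) * r ^ (N mod s)"
  proof -
    have "r ^ N = r ^ (s * (N div s) + N mod s)" by simp
    then show ?thesis by (simp only: power_add power_mult)
  qed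
  also have "[\<dots> = 1 ^ (N div s) * r ^ (N mod s)] (mod t)"
    using assms by (intro cong_mult cong_pow) auto
  finally show ?thesis by simp
qed

lemma Ggrp_mult: "(i, j, q) \<otimes>\<^bsub>Ggrp n t s r a b\<^esub> (k, l, q') =
   ((i + r ^ nat j * qchar a b q * k) mod int t, (j + l) mod int s, q \<otimes>\<^bsub>quat (2 ^ (n - 2))\<^esub> q')"
  by (simp add: Ggrp_def)

lemma Ggrp_one: "\<one>\<^bsub>Ggrp n t s r a b\<^esub> = (0, 0, (0, False))"
  by (simp add: Ggrp_def quat_one)

lemma Ggrp_carrier: "carrier (Ggrp n t s r a b) = {0..<int t} \<times> {0..<int s} \<times> carrier (quat (2 ^ (n - 2)))"
  by (simp add: Ggrp_def)

lemma Csemi_mult: "(i, q) \<otimes>\<^bsub>Csemi m n a b\<^esub> (k, q') =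
   ((i + qchar a b q * k) mod int m, q \<otimes>\<^bsub>quat (2 ^ (n - 2))\<^esub> q')"
  by (simp add: Csemi_def)

lemma Csemi_one: "\<one>\<^bsub>Csemi m n a b\<^esub> = (0, (0, False))"
  by (simp add: Csemi_def quat_one)

lemma Csemi_carrier: "carrier (Csemi m n a b) = {0..<int m} \<times> carrier (quat (2 ^ (n - 2)))"
  by (simp add: Csemi_def)

lemma qchar_one[simp]: "qchar a b (0, False) = 1" by (simp add: qchar_def)

lemma kq: assumes "n \<ge> 3" shows "even ((2::nat) ^ (n - 2))" "(2::nat) ^ (n - 2) \<ge> 1"
  using assms by (auto simp: Suc_le_eq)

lemma Ggrp_group:
  assumes "n \<ge> 3" "t \<ge> 1" "s \<ge> 1" "[r ^ s = 1] (mod int t)"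
    "[a ^ 2 = 1] (mod int t)" "[b ^ 2 = 1] (mod int t)"
  shows "group (Ggrp n t s r a b)"
proof -
  let ?Q = "quat (2 ^ (n - 2))"
  interpret Q: group ?Q using quat_group kq[OF assms(1)] by blast
  show ?thesis
  proof (rule groupI)
    fix x y assume "x \<in> carrier (Ggrp n t s r a b)" "y \<in> carrier (Ggrp n t s r a b)"
    then show "x \<otimes>\<^bsub>Ggrp n t s r a b\<^esub> y \<in> carrier (Ggrp n t s r a b)" using assms
      by (cases x; cases y) (auto simp: Ggrp_mult Ggrp_carrier)
  next
    show "\<one>\<^bsub>Ggrp n t s r a b\<^esub> \<in> carrier (Ggrp n t s r a b)"
      using assms Q.one_closed by (simp add: Ggrp_one Ggrp_carrier quat_one)
  next
    fix x y z assume xyz: "x \<in> carrier (Ggrp n t s r a b)" "y \<in> carrier (Ggrp n t s r a b)" "z \<in> carrier (Ggrp n t s r a b)"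
    obtain i j q k l q' w p q'' where e: "x = (i, j, q)" "y = (k, l, q')" "z = (w, p, q'')"
      by (cases x, cases y, cases z) auto
    have c: "q \<in> carrier ?Q" "q' \<in> carrier ?Q" "q'' \<in> carrier ?Q" "j \<ge> 0" "l \<ge> 0" "j < s" "l < s"
      using xyz e by (auto simp: Ggrp_carrier)
    have rr: "[r ^ nat ((j + l) mod int s) = r ^ nat j * r ^ nat l] (mod int t)"
    proof -
      have "nat ((j + l) mod int s) = (nat j + nat l) mod s" using c by (simp add: nat_mod_distrib nat_add_distrib)
      then have "[r ^ (nat j + nat l) = r ^ nat ((j + l) mod int s)] (mod int t)"
        using pow_mod_s[OF assms(4)] by simp
      then show ?thesis by (simp add: power_add cong_sym)
    qed
    have cc: "[qchar a b (q \<otimes>\<^bsub>?Q\<^esub> q') = qchar a b q * qchar a b q'] (mod int t)"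
      using qchar_mult[OF kq[OF assms(1)] assms(5,6) c(1,2)] .
    have R: "[r ^ nat ((j + l) mod int s) * qchar a b (q \<otimes>\<^bsub>?Q\<^esub> q') = (r ^ nat j * qchar a b q) * (r ^ nat l * qchar a b q')] (mod int t)"
    proof -
      have "[r ^ nat ((j + l) mod int s) * qchar a b (q \<otimes>\<^bsub>?Q\<^esub> q') = (r ^ nat j * r ^ nat l) * (qchar a b q * qchar a b q')] (mod int t)"
        using rr cc by (rule cong_mult)
      then show ?thesis by (simp add: ac_simps)
    qed
    show "(x \<otimes>\<^bsub>Ggrp n t s r a b\<^esub> y) \<otimes>\<^bsub>Ggrp n t s r a b\<^esub> z = x \<otimes>\<^bsub>Ggrp n t s r a b\<^esub> (y \<otimes>\<^bsub>Ggrp n t s r a b\<^esub> z)"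
      unfolding e Ggrp_mult
      apply (simp only: prod.inject)
      apply (intro conjI)
        apply (rule assoc_fst[OF R])
       apply (simp add: mod_add_left_eq mod_add_right_eq add.assoc)
      apply (rule Q.m_assoc[OF c(1-3)])
      done
  next
    fix x assume "x \<in> carrier (Ggrp n t s r a b)"
    then show "\<one>\<^bsub>Ggrp n t s r a b\<^esub> \<otimes>\<^bsub>Ggrp n t s r a b\<^esub> x = x"
      using Q.l_one by (cases x) (auto simp: Ggrp_mult Ggrp_carrier Ggrp_one quat_one)
  next
    fix x assume x: "x \<in> carrier (Ggrp n t s r a b)"
    obtain i j q where e: "x = (i, j, q)" by (cases x) auto
    have c: "q \<in> carrier ?Q" using x e by (auto simp: Ggrp_carrier)
    define l where "l = (- j) mod int s"
    define q' where "q' = inv\<^bsub>?Q\<^esub> q"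
    show "\<exists>y\<in>carrier (Ggrp n t s r a b). y \<otimes>\<^bsub>Ggrp n t s r a b\<^esub> x = \<one>\<^bsub>Ggrp n t s r a b\<^esub>"
    proof (rule bexI[of _ "((- (r ^ nat l * qchar a b q' * i)) mod int t, l, q')"])
      show "((- (r ^ nat l * qchar a b q' * i)) mod int t, l, q') \<otimes>\<^bsub>Ggrp n t s r a b\<^esub> x = \<one>\<^bsub>Ggrp n t s r a b\<^esub>"
        unfolding e Ggrp_mult Ggrp_one
        apply (simp only: prod.inject)
        apply (intro conjI)
          apply (simp add: mod_add_left_eq)
         apply (simp add: mod_add_left_eq l_def)
        using Q.l_inv[OF c] by (simp add: quat_one q'_def)
      show "((- (r ^ nat l * qchar a b q' * i)) mod int t, l, q') \<in> carrier (Ggrp n t s r a b)"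
        using c assms unfolding Ggrp_carrier l_def q'_def by simp
    qed
  qed
qed


lemma Csemi_group:
  assumes "n \<ge> 3" "m \<ge> 1" "[a ^ 2 = 1] (mod int m)" "[b ^ 2 = 1] (mod int m)"
  shows "group (Csemi m n a b)"
proof -
  let ?Q = "quat (2 ^ (n - 2))"
  interpret Q: group ?Q using quat_group kq[OF assms(1)] by blast
  show ?thesis
  proof (rule groupI)
    fix x y assume "x \<in> carrier (Csemi m n a b)" "y \<in> carrier (Csemi m n a b)"
    then show "x \<otimes>\<^bsub>Csemi m n a b\<^esub> y \<in> carrier (Csemi m n a b)" using assms
      by (cases x; cases y) (auto simp: Csemi_mult Csemi_carrier)
  next
    show "\<one>\<^bsub>Csemi m n a b\<^esub> \<in> carrier (Csemi m n a b)"
      using assms Q.one_closed by (simp add: Csemi_one Csemi_carrier quat_one)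
  next
    fix x y z assume xyz: "x \<in> carrier (Csemi m n a b)" "y \<in> carrier (Csemi m n a b)" "z \<in> carrier (Csemi m n a b)"
    obtain i q k q' w q'' where e: "x = (i, q)" "y = (k, q')" "z = (w, q'')"
      by (cases x, cases y, cases z) auto
    have c: "q \<in> carrier ?Q" "q' \<in> carrier ?Q" "q'' \<in> carrier ?Q"
      using xyz e by (auto simp: Csemi_carrier)
    have R: "[qchar a b (q \<otimes>\<^bsub>?Q\<^esub> q') = qchar a b q * qchar a b q'] (mod int m)"
      using qchar_mult[OF kq[OF assms(1)] assms(3,4) c(1,2)] .
    show "(x \<otimes>\<^bsub>Csemi m n a b\<^esub> y) \<otimes>\<^bsub>Csemi m n a b\<^esub> z = x \<otimes>\<^bsub>Csemi m n a b\<^esub> (y \<otimes>\<^bsub>Csemi m n a b\<^esub> z)"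
      unfolding e Csemi_mult
      apply (simp only: prod.inject)
      apply (intro conjI)
       apply (rule assoc_fst[OF R])
      apply (rule Q.m_assoc[OF c(1-3)])
      done
  next
    fix x assume "x \<in> carrier (Csemi m n a b)"
    then show "\<one>\<^bsub>Csemi m n a b\<^esub> \<otimes>\<^bsub>Csemi m n a b\<^esub> x = x"
      using Q.l_one by (cases x) (auto simp: Csemi_mult Csemi_carrier Csemi_one quat_one)
  next
    fix x assume x: "x \<in> carrier (Csemi m n a b)"
    obtain i q where e: "x = (i, q)" by (cases x) auto
    have c: "q \<in> carrier ?Q" using x e by (auto simp: Csemi_carrier)
    define q' where "q' = inv\<^bsub>?Q\<^esub> q"
    show "\<exists>y\<in>carrier (Csemi m n a b). y \<otimes>\<^bsub>Csemi m n a b\<^esub> x = \<one>\<^bsub>Csemi m n a b\<^esub>"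
    proof (rule bexI[of _ "((- (qchar a b q' * i)) mod int m, q')"])
      show "((- (qchar a b q' * i)) mod int m, q') \<otimes>\<^bsub>Csemi m n a b\<^esub> x = \<one>\<^bsub>Csemi m n a b\<^esub>"
        unfolding e Csemi_mult Csemi_one
        apply (simp only: prod.inject)
        apply (intro conjI)
         apply (simp add: mod_add_left_eq)
        using Q.l_inv[OF c] by (simp add: quat_one q'_def)
      show "((- (qchar a b q' * i)) mod int m, q') \<in> carrier (Csemi m n a b)"
        using c assms unfolding Csemi_carrier q'_def by simp
    qed
  qed
qed



lemma backward:
  fixes n t s m :: nat and r a b :: int
  assumes "n \<ge> 3" and "t \<ge> 1" and "s \<ge> 1"
    and "[r ^ s = 1] (mod int t)"
    and "[a ^ 2 = 1] (mod int t)" and "[b ^ 2 = 1] (mod int t)"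
    and "m \<ge> 1" and mt: "m dvd t" and r1: "[r = 1] (mod int m)"
    and iso: "quat (2 ^ (n - 2) * m) \<cong> Csemi m n a b"
  shows "\<exists>N. N \<lhd> Ggrp n t s r a b \<and> Ggrp n t s r a b Mod N \<cong> quat (2 ^ (n - 2) * m)"
proof -
  let ?G = "Ggrp n t s r a b" and ?C = "Csemi m n a b" and ?Q = "quat (2 ^ (n - 2))"
  have mt': "int m dvd int t" using mt by simp
  have gG: "group ?G" using Ggrp_group assms by blast
  have gC: "group ?C" using Csemi_group[OF assms(1,7)] cong_dvd_modulus[OF assms(5) mt'] cong_dvd_modulus[OF assms(6) mt'] by blast
  define f where "f = (\<lambda>(x :: int \<times> int \<times> (int \<times> bool)). (fst x mod int m, snd (snd x)))"
  have fhom: "f \<in> hom ?G ?C"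
  proof (rule homI)
    fix x assume "x \<in> carrier ?G"
    then show "f x \<in> carrier ?C" using assms(7) by (auto simp: f_def Ggrp_carrier Csemi_carrier)
  next
    fix x y assume xy: "x \<in> carrier ?G" "y \<in> carrier ?G"
    obtain i j q k l q' where e: "x = (i, j, q)" "y = (k, l, q')" by (cases x, cases y) auto
    have rj: "[r ^ nat j = 1] (mod int m)" using cong_pow[OF r1, of "nat j"] by simp
    have "[i + r ^ nat j * qchar a b q * k = i + 1 * qchar a b q * (k mod int m)] (mod int m)"
      by (intro cong_add cong_mult cong_refl rj) (simp add: cong_def)
    then have "(i + r ^ nat j * qchar a b q * k) mod int t mod int m = (i mod int m + qchar a b q * (k mod int m)) mod int m"
      unfolding mod_mod_cancel[OF mt'] cong_def by (simp add: mod_add_left_eq)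
    then show "f (x \<otimes>\<^bsub>?G\<^esub> y) = f x \<otimes>\<^bsub>?C\<^esub> f y"
      by (simp add: e f_def Ggrp_mult Csemi_mult)
  qed
  interpret fh: group_hom ?G ?C f using gG gC fhom by (simp add: group_hom_def group_hom_axioms_def)
  have surj: "f ` carrier ?G = carrier ?C"
  proof
    show "f ` carrier ?G \<subseteq> carrier ?C" using fhom by (auto simp: hom_def)
  next
    show "carrier ?C \<subseteq> f ` carrier ?G"
    proof
      fix y assume y: "y \<in> carrier ?C"
      obtain i q where e: "y = (i, q)" by (cases y)
      have "m \<le> t" using mt assms(2) by (simp add: dvd_imp_le)
      then have "(i, 0, q) \<in> carrier ?G" using y e assms(3) by (auto simp: Ggrp_carrier Csemi_carrier)
      moreover have "f (i, 0, q) = y" using y e by (auto simp: f_def Csemi_carrier)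
      ultimately show "y \<in> f ` carrier ?G" by force
    qed
  qed
  have "?G Mod kernel ?G ?C f \<cong> ?C" by (rule fh.FactGroup_iso[OF surj])
  also have "?C \<cong> quat (2 ^ (n - 2) * m)" proof -
    have "2 ^ (n - 2) * m \<ge> 1" using assms(7) by simp
    then show ?thesis using group.iso_sym[OF quat_group] iso by blast
  qed
  finally show ?thesis using fh.normal_kernel by blast
qed



lemma QL1: "snd (x \<otimes>\<^bsub>quat k\<^esub> y) = (snd x \<noteq> snd y)"
  by (cases x; cases y) (simp add: quat_mult)

lemma QL2: "snd (x [^]\<^bsub>quat k\<^esub> (N::nat)) = (odd N \<and> snd x)"
  by (induction N) (auto simp: QL1 quat_one)

lemma QL3: "(c, False) [^]\<^bsub>quat k\<^esub> (N::nat) = ((int N * c) mod (2 * int k), False)"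
proof (induction N)
  case 0 then show ?case by (simp add: quat_one)
next
  case (Suc N) then show ?case by (simp add: quat_mult mod_add_left_eq mod_add_right_eq distrib_right add.commute)
qed

lemma QL4: "((x::int) mod (2 * int k), False) \<otimes>\<^bsub>quat k\<^esub> (y mod (2 * int k), False) = ((x + y) mod (2 * int k), False)"
  by (simp add: quat_mult mod_simps)

lemma GU: "t \<ge> 1 \<Longrightarrow> s \<ge> 1 \<Longrightarrow> (1 mod int t, 0, (0, False)) [^]\<^bsub>Ggrp n t s r a b\<^esub> (N::nat) = (int N mod int t, 0, (0, False))"
proof (induction N)
  case 0 then show ?case by (simp add: Ggrp_one)
next
  case (Suc N) then show ?case by (simp add: Ggrp_mult quat_mult mod_simps add.commute)
qed

lemma GV: "t \<ge> 1 \<Longrightarrow> s \<ge> 1 \<Longrightarrow> (0, 1 mod int s, (0, False)) [^]\<^bsub>Ggrp n t s r a b\<^esub> (N::nat) = (0, int N mod int s, (0, False))"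
proof (induction N)
  case 0 then show ?case by (simp add: Ggrp_one)
next
  case (Suc N) then show ?case by (simp add: Ggrp_mult quat_mult mod_simps add.commute)
qed

lemma GQ: "(0, 0, q) [^]\<^bsub>Ggrp n t s r a b\<^esub> (N::nat) = (0, 0, q [^]\<^bsub>quat (2 ^ (n - 2))\<^esub> N)"
proof (induction N)
  case 0 then show ?case by (simp add: Ggrp_one quat_one)
next
  case (Suc N) then show ?case by (simp add: Ggrp_mult)
qed

lemma card_quat: "card (carrier (quat k)) = 4 * k"
  by (simp add: quat_carrier card_cartesian_product)



lemma forward_core:
  fixes n t s m :: nat and r a b :: int and h :: "int \<times> int \<times> (int \<times> bool) \<Rightarrow> int \<times> bool"
  assumes n3: "n \<ge> 3" and t1: "t \<ge> 1" and s1: "s \<ge> 1" and ot: "odd t" and os: "odd s"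
    and rs: "[r ^ s = 1] (mod int t)"
    and a2: "[a ^ 2 = 1] (mod int t)" and b2: "[b ^ 2 = 1] (mod int t)"
    and m1: "m \<ge> 1" and om: "odd m"
    and hh: "h \<in> hom (Ggrp n t s r a b) (quat (2 ^ (n - 2) * m))"
    and hs: "h ` carrier (Ggrp n t s r a b) = carrier (quat (2 ^ (n - 2) * m))"
  shows "m dvd t \<and> [r = 1] (mod int m) \<and> quat (2 ^ (n - 2) * m) \<cong> Csemi m n a b"
proof -
  define K where "K = 2 ^ (n - 2) * m"
  define M2 where "M2 = 2 * int K"
  let ?G = "Ggrp n t s r a b" and ?Q = "quat (2 ^ (n - 2))" and ?P = "quat K"
  have K1: "K \<ge> 1" using m1 by (simp add: K_def)
  have M2pos: "M2 \<ge> 2" using K1 by (simp add: M2_def)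
  have M2eq: "M2 = 2 ^ (n - 1) * int m"
  proof -
    have "n - 1 = Suc (n - 2)" using n3 by simp
    then show ?thesis by (simp add: M2_def K_def)
  qed
  have mM2: "int m dvd M2" using M2eq by simp
  interpret G: group ?G using Ggrp_group n3 t1 s1 rs a2 b2 by blast
  interpret P: group ?P using quat_group K1 by blast
  interpret Q: group ?Q using quat_group kq[OF n3] by blast
  have hh': "h \<in> hom ?G ?P" using hh by (simp add: K_def)
  have hs': "h ` carrier ?G = carrier ?P" using hs by (simp add: K_def)
  have hmul: "\<And>x y. x \<in> carrier ?G \<Longrightarrow> y \<in> carrier ?G \<Longrightarrow> h (x \<otimes>\<^bsub>?G\<^esub> y) = h x \<otimes>\<^bsub>?P\<^esub> h y"
    using hh' by (simp add: hom_mult)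
  have hcar: "\<And>x. x \<in> carrier ?G \<Longrightarrow> h x \<in> carrier ?P"
    using hh' by (auto simp: hom_def)
  have h1: "h (0, 0, (0, False)) = (0, False)"
    using hom_one[OF hh' G.is_group P.is_group] by (simp add: Ggrp_one quat_one)
  have hpow: "\<And>x N. x \<in> carrier ?G \<Longrightarrow> h (x [^]\<^bsub>?G\<^esub> (N::nat)) = h x [^]\<^bsub>?P\<^esub> N"
    using hom_nat_pow[OF hh' _ G.is_group P.is_group] by blast
  have Pcar: "\<And>x. ((x::int) mod M2, False) \<in> carrier ?P" using M2pos by (simp add: quat_carrier M2_def)
  have Pone: "\<one>\<^bsub>?P\<^esub> = (0, False)" by (simp add: quat_one)
  have lq: "\<And>q. q \<in> carrier ?Q \<Longrightarrow> (0, False) \<otimes>\<^bsub>?Q\<^esub> q = q" using Q.l_one by (simp add: quat_one)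
  have rq: "\<And>q. q \<in> carrier ?Q \<Longrightarrow> q \<otimes>\<^bsub>?Q\<^esub> (0, False) = q" using Q.r_one by (simp add: quat_one)
  have q1: "(0, False) \<in> carrier ?Q" using Q.one_closed by (simp add: quat_one)
  define U where "U = (1 mod int t, 0::int, (0::int, False))"
  have Uc: "U \<in> carrier ?G" using t1 s1 q1 by (simp add: U_def Ggrp_carrier)
  obtain c e1 where al: "h U = (c, e1)" by (cases "h U")
  have c0: "0 \<le> c" "c < M2" using hcar[OF Uc] al by (auto simp: quat_carrier M2_def)
  have Ut: "U [^]\<^bsub>?G\<^esub> t = \<one>\<^bsub>?G\<^esub>" using GU[OF t1 s1, where N=t and n=n and r=r and a=a and b=b] by (simp add: U_def Ggrp_one)
  have "h U [^]\<^bsub>?P\<^esub> t = (0, False)" using hpow[OF Uc, of t] Ut h1 by (simp add: Ggrp_one)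
  then have "\<not> e1" using QL2[where x="h U" and k=K and N=t] ot al by simp
  then have al': "h U = (c, False)" using al by simp
  have "(int t * c) mod M2 = 0"
    using hpow[OF Uc, of t] Ut h1 QL3[where c=c and k=K and N=t] al' by (simp add: Ggrp_one M2_def)
  then have M2tc: "M2 dvd int t * c" by auto
  have hU: "\<And>z. h (z mod int t, 0, (0, False)) = ((z * c) mod M2, False)"
  proof -
    fix z :: int
    define N where "N = nat (z mod int t)"
    have zN: "z mod int t = int N" using t1 by (simp add: N_def)
    have zN2: "int N mod int t = int N" using zN by (metis mod_mod_trivial)
    have e: "(z mod int t, 0::int, (0::int, False)) = U [^]\<^bsub>?G\<^esub> N"
      using GU[OF t1 s1, where N=N and n=n and r=r and a=a and b=b] zN zN2 by (simp add: U_def)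
    have "h (z mod int t, 0, (0, False)) = ((z mod int t) * c mod M2, False)"
      unfolding e hpow[OF Uc] al' QL3 using zN by (simp add: M2_def)
    also have "(z mod int t) * c mod M2 = (z * c) mod M2"
    proof -
      have ee: "z mod int t = z - z div int t * int t" using div_mult_mod_eq[of z "int t"] by linarith
      have "(z mod int t) * c - z * c = - (z div int t) * (int t * c)" by (simp add: ee algebra_simps)
      then have "M2 dvd (z mod int t) * c - z * c" using M2tc by simp
      then show ?thesis by (simp add: mod_eq_dvd_iff)
    qed
    finally show "h (z mod int t, 0, (0, False)) = ((z * c) mod M2, False)" .
  qed
  define V where "V = (0::int, 1 mod int s, (0::int, False))"
  have Vc: "V \<in> carrier ?G" using t1 s1 q1 by (simp add: V_def Ggrp_carrier)
  obtain d e2 where be: "h V = (d, e2)" by (cases "h V")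
  have d0: "0 \<le> d" "d < M2" using hcar[OF Vc] be by (auto simp: quat_carrier M2_def)
  have Vs: "V [^]\<^bsub>?G\<^esub> s = \<one>\<^bsub>?G\<^esub>" using GV[OF t1 s1, where N=s and n=n and r=r and a=a and b=b] by (simp add: V_def Ggrp_one)
  have "h V [^]\<^bsub>?P\<^esub> s = (0, False)" using hpow[OF Vc, of s] Vs h1 by (simp add: Ggrp_one)
  then have "\<not> e2" using QL2[where x="h V" and k=K and N=s] os be by simp
  then have be': "h V = (d, False)" using be by simp
  have "(int s * d) mod M2 = 0"
    using hpow[OF Vc, of s] Vs h1 QL3[where c=d and k=K and N=s] be' by (simp add: Ggrp_one M2_def)
  then have M2sd: "M2 dvd int s * d" by auto
  have hV0: "\<And>j. 0 \<le> j \<Longrightarrow> j < int s \<Longrightarrow> h (0, j, (0, False)) = ((j * d) mod M2, False)"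
  proof -
    fix j :: int assume j: "0 \<le> j" "j < int s"
    define N where "N = nat j"
    have zN: "j = int N" using j by (simp add: N_def)
    have e: "(0::int, j, (0::int, False)) = V [^]\<^bsub>?G\<^esub> N"
      using GV[OF t1 s1, where N=N and n=n and r=r and a=a and b=b] zN j by (simp add: V_def)
    show "h (0, j, (0, False)) = ((j * d) mod M2, False)"
      unfolding e hpow[OF Vc] be' QL3 using zN by (simp add: M2_def)
  qed
  have dec: "\<And>i j q. (i, j, q) \<in> carrier ?G \<Longrightarrow>
      h (i, j, q) = ((i * c) mod M2, False) \<otimes>\<^bsub>?P\<^esub> (((j * d) mod M2, False) \<otimes>\<^bsub>?P\<^esub> h (0, 0, q))"
  proof -
    fix i j q assume g: "(i, j, q) \<in> carrier ?G"
    have qc: "q \<in> carrier ?Q" and ij: "0 \<le> i" "i < int t" "0 \<le> j" "j < int s" using g by (auto simp: Ggrp_carrier)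
    have c1: "(i, 0, (0, False)) \<in> carrier ?G" "(0, j, (0, False)) \<in> carrier ?G" "(0, 0, q) \<in> carrier ?G"
      using ij qc q1 s1 t1 by (auto simp: Ggrp_carrier)
    have "(i, j, q) = (i, 0, (0, False)) \<otimes>\<^bsub>?G\<^esub> ((0, j, (0, False)) \<otimes>\<^bsub>?G\<^esub> (0, 0, q))"
      using ij qc by (simp add: Ggrp_mult lq)
    then have "h (i, j, q) = h (i, 0, (0, False)) \<otimes>\<^bsub>?P\<^esub> (h (0, j, (0, False)) \<otimes>\<^bsub>?P\<^esub> h (0, 0, q))"
      using c1 by (simp add: hmul)
    moreover have "h (i, 0, (0, False)) = ((i * c) mod M2, False)" using hU[of i] ij by simp
    ultimately show "h (i, j, q) = ((i * c) mod M2, False) \<otimes>\<^bsub>?P\<^esub> (((j * d) mod M2, False) \<otimes>\<^bsub>?P\<^esub> h (0, 0, q))"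
      using hV0[OF ij(3,4)] by simp
  qed
  have hQc: "\<And>q. q \<in> carrier ?Q \<Longrightarrow> h (0, 0, q) \<in> carrier ?P"
    using hcar t1 s1 by (simp add: Ggrp_carrier)
  have "(0, True) \<in> carrier ?P" using K1 by (simp add: quat_carrier)
  then obtain g where gc: "g \<in> carrier ?G" and hg: "h g = (0, True)" using hs' by (metis imageE)
  obtain i j q where ge: "g = (i, j, q)" by (cases g) auto
  have qc: "q \<in> carrier ?Q" using gc ge by (auto simp: Ggrp_carrier)
  obtain e0 f0 where eta: "h (0, 0, q) = (e0, f0)" by (cases "h (0, 0, q)")
  have "snd (h g) = f0" using dec[of i j q] gc ge eta by (simp add: QL1)
  then have eta': "h (0, 0, q) = (e0, True)" using hg eta by simp
  have comm: "V \<otimes>\<^bsub>?G\<^esub> (0, 0, q) = (0, 0, q) \<otimes>\<^bsub>?G\<^esub> V"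
    using qc by (simp add: V_def Ggrp_mult lq rq)
  have c00: "(0, 0, q) \<in> carrier ?G" using qc t1 s1 by (simp add: Ggrp_carrier)
  have "h V \<otimes>\<^bsub>?P\<^esub> h (0, 0, q) = h (0, 0, q) \<otimes>\<^bsub>?P\<^esub> h V"
    using comm hmul[OF Vc c00] hmul[OF c00 Vc] by simp
  then have "(d + e0) mod M2 = (e0 - d) mod M2" using be' eta' by (simp add: quat_mult M2_def)
  then have "M2 dvd 2 * d" by (simp add: mod_eq_dvd_iff)
  moreover obtain u where su: "s = 2 * u + 1" using os by (metis oddE)
  ultimately have "M2 dvd int s * d - int u * (2 * d)" using M2sd by simp
  moreover have "int s * d - int u * (2 * d) = d" using su by (simp add: algebra_simps)
  ultimately have "M2 dvd d" by simp
  then have d00: "d = 0" using d0 by (metis dvd_imp_le_int linorder_not_less dual_order.strict_iff_not less_le_not_le zdvd_imp_le neq_iff)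
  have dec': "\<And>i j q. (i, j, q) \<in> carrier ?G \<Longrightarrow> h (i, j, q) = ((i * c) mod M2, False) \<otimes>\<^bsub>?P\<^esub> h (0, 0, q)"
  proof -
    fix i j q assume g: "(i, j, q) \<in> carrier ?G"
    have "q \<in> carrier ?Q" using g by (auto simp: Ggrp_carrier)
    then show "h (i, j, q) = ((i * c) mod M2, False) \<otimes>\<^bsub>?P\<^esub> h (0, 0, q)"
      using dec[OF g] d00 P.l_one[OF hQc] by (simp add: Pone)
  qed
  have hQc': "\<And>q. q \<in> carrier ?Q \<Longrightarrow> (0, 0, q) \<in> carrier ?G"
    using t1 s1 by (simp add: Ggrp_carrier)
  have "(1, False) \<in> carrier ?P" using K1 by (simp add: quat_carrier)
  then obtain g1 where g1c: "g1 \<in> carrier ?G" and hg1: "h g1 = (1, False)" using hs' by (metis imageE)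
  obtain i1 j1 q1 where g1e: "g1 = (i1, j1, q1)" by (cases g1) auto
  have q1c: "q1 \<in> carrier ?Q" using g1c g1e by (auto simp: Ggrp_carrier)
  obtain y f where yf: "h (0, 0, q1) = (y, f)" by (cases "h (0, 0, q1)")
  have "(1, False) = (((i1 * c) mod M2 + y) mod M2, f)"
    using dec'[of i1 j1 q1] g1c g1e hg1 yf by (simp add: quat_mult M2_def)
  then have f0: "\<not> f" and "((i1 * c) mod M2 + y) mod M2 = 1" by auto
  then have cg1: "[i1 * c + y = 1] (mod M2)" using M2pos by (simp add: cong_def mod_add_left_eq)
  have ordQ: "order ?Q = 2 ^ n"
  proof -
    have e: "2 + (n - 2) = n" using n3 by simp
    have "(2::nat) ^ n = 2 ^ (2 + (n - 2))" by (simp only: e)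
    also have "\<dots> = 4 * 2 ^ (n - 2)" by (simp add: power_add)
    finally show ?thesis by (simp add: order_def card_quat)
  qed
  have "(0, 0, q1) [^]\<^bsub>?G\<^esub> ((2::nat) ^ n) = \<one>\<^bsub>?G\<^esub>"
    using GQ[where q=q1 and N="2^n" and n=n and t=t and s=s and r=r and a=a and b=b] Q.pow_order_eq_1[OF q1c] ordQ
    by (simp add: Ggrp_one quat_one)
  then have "(y, False) [^]\<^bsub>?P\<^esub> ((2::nat) ^ n) = (0, False)"
    using hpow[OF hQc'[OF q1c], of "2 ^ n"] yf f0 h1 by (simp add: Ggrp_one)
  then have "(2 ^ n * y) mod M2 = 0" using QL3[where c=y and k=K and N="2^n"] by (simp add: M2_def)
  then have "M2 dvd 2 ^ n * y" by auto
  then have "int m dvd 2 ^ n * y" using mM2 dvd_trans by blast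
  moreover have "coprime (int m) (2 ^ n)" using om by simp
  ultimately have my: "int m dvd y" using coprime_dvd_mult_right_iff by blast
  have "[i1 * c + y = 1] (mod int m)" using cong_dvd_modulus[OF cg1 mM2] .
  moreover have "[i1 * c + y = i1 * c + 0] (mod int m)" using my by (intro cong_add cong_refl) (simp add: cong_0_iff)
  ultimately have ic1: "[i1 * c = 1] (mod int m)" by (metis add.right_neutral cong_sym cong_trans)
  have tc0: "[int t * c = 0] (mod int m)" using M2tc mM2 dvd_trans by (simp add: cong_0_iff) blast
  have "[int t = int t * (i1 * c)] (mod int m)" using ic1 by (metis cong_scalar_left mult.right_neutral cong_sym)
  also have "int t * (i1 * c) = i1 * (int t * c)" by simp
  also have "[i1 * (int t * c) = i1 * 0] (mod int m)" using tc0 by (rule cong_scalar_left)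
  finally have "int m dvd int t" by (simp add: cong_0_iff)
  then have mt: "m dvd t" by simp
  have mt': "int m dvd int t" using mt by simp
  define z where "z = r ^ nat (1 mod int s)"
  have zr: "[z = r] (mod int t)"
  proof (cases "s = 1")
    case True
    then show ?thesis using rs by (simp add: z_def cong_sym)
  next
    case False
    then have "1 mod int s = 1" using s1 by simp
    then show ?thesis by (simp add: z_def)
  qed
  have VU: "V \<otimes>\<^bsub>?G\<^esub> U = (z mod int t, 0, (0, False)) \<otimes>\<^bsub>?G\<^esub> V"
    by (simp add: V_def U_def Ggrp_mult z_def[symmetric] mod_mult_right_eq quat_mult)
  have zc: "(z mod int t, 0, (0, False)) \<in> carrier ?G" using t1 s1 q1 by (simp add: Ggrp_carrier)
  have "h V \<otimes>\<^bsub>?P\<^esub> h U = h (z mod int t, 0, (0, False)) \<otimes>\<^bsub>?P\<^esub> h V"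
    using VU hmul[OF Vc Uc] hmul[OF zc Vc] by simp
  then have "h U = h (z mod int t, 0, (0, False))"
    using be' d00 P.l_one[OF hcar[OF Uc]] P.r_one[OF hcar[OF zc]] by (simp add: Pone)
  then have "c = (z * c) mod M2" using hU[of z] al' by simp
  then have "[z * c = c] (mod M2)" using c0 by (simp add: cong_def)
  then have zc1: "[z * c = c] (mod int m)" using cong_dvd_modulus mM2 by blast
  have "[r * c = z * c] (mod int m)" using cong_dvd_modulus[OF zr mt'] by (simp add: cong_sym cong_mult)
  then have rc: "[r * c = c] (mod int m)" using zc1 by (rule cong_trans)
  have "[r = r * (i1 * c)] (mod int m)" using ic1 by (metis cong_scalar_left mult.right_neutral cong_sym)
  also have "r * (i1 * c) = i1 * (r * c)" by simp
  also have "[i1 * (r * c) = i1 * c] (mod int m)" using rc by (rule cong_scalar_left)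
  also have "[i1 * c = 1] (mod int m)" by (rule ic1)
  finally have r1: "[r = 1] (mod int m)" .
  let ?C = "Csemi m n a b"
  have gC: "group ?C" using Csemi_group[OF n3 m1] cong_dvd_modulus[OF a2 mt'] cong_dvd_modulus[OF b2 mt'] by blast
  have "M2 dvd int t * c" by (rule M2tc)
  then have "2 ^ (n - 1) dvd int t * c" using M2eq by (metis dvd_mult_left)
  moreover have "coprime ((2::int) ^ (n - 1)) (int t)" using ot by simp
  ultimately have "2 ^ (n - 1) dvd c" using coprime_dvd_mult_right_iff by blast
  then have M2mc: "M2 dvd int m * c" using M2eq by (simp add: mult_dvd_mono mult.commute)
  define Pf where "Pf = (\<lambda>x::int. ((x * c) mod M2, False))"
  have Pfc: "\<And>x. Pf x \<in> carrier ?P" using Pcar by (simp add: Pf_def)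
  have Pfadd: "\<And>x y. Pf x \<otimes>\<^bsub>?P\<^esub> Pf y = Pf (x + y)"
    using QL4 by (simp add: Pf_def M2_def distrib_right)
  have Pfm: "\<And>x. Pf (x mod int m) = Pf x"
  proof -
    fix x :: int
    have ee: "x mod int m = x - x div int m * int m" using div_mult_mod_eq[of x "int m"] by linarith
    have "(x mod int m) * c - x * c = - (x div int m) * (int m * c)" by (simp add: ee algebra_simps)
    then have "M2 dvd (x mod int m) * c - x * c" using M2mc by simp
    then show "Pf (x mod int m) = Pf x" by (simp add: Pf_def mod_eq_dvd_iff)
  qed
  have hUP: "\<And>x. h (x mod int t, 0, (0, False)) = Pf x" using hU by (simp add: Pf_def)
  have hQmul: "\<And>q q'. q \<in> carrier ?Q \<Longrightarrow> q' \<in> carrier ?Q \<Longrightarrow>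
      h (0, 0, q \<otimes>\<^bsub>?Q\<^esub> q') = h (0, 0, q) \<otimes>\<^bsub>?P\<^esub> h (0, 0, q')"
  proof -
    fix q q' assume qq: "q \<in> carrier ?Q" "q' \<in> carrier ?Q"
    have "(0, 0, q \<otimes>\<^bsub>?Q\<^esub> q') = (0, 0, q) \<otimes>\<^bsub>?G\<^esub> (0, 0, q')" by (simp add: Ggrp_mult)
    then show "h (0, 0, q \<otimes>\<^bsub>?Q\<^esub> q') = h (0, 0, q) \<otimes>\<^bsub>?P\<^esub> h (0, 0, q')"
      using hmul[OF hQc'[OF qq(1)] hQc'[OF qq(2)]] by simp
  qed
  have hcomm: "\<And>q k. q \<in> carrier ?Q \<Longrightarrow>
      h (0, 0, q) \<otimes>\<^bsub>?P\<^esub> Pf k = Pf (qchar a b q * k) \<otimes>\<^bsub>?P\<^esub> h (0, 0, q)"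
  proof -
    fix q k assume qc: "q \<in> carrier ?Q"
    have k1: "(k mod int t, 0, (0, False)) \<in> carrier ?G" "((qchar a b q * k) mod int t, 0, (0, False)) \<in> carrier ?G"
      using t1 s1 q1 by (simp_all add: Ggrp_carrier)
    have "(0, 0, q) \<otimes>\<^bsub>?G\<^esub> (k mod int t, 0, (0, False)) = ((qchar a b q * k) mod int t, 0, (0, False)) \<otimes>\<^bsub>?G\<^esub> (0, 0, q)"
      using qc by (simp add: Ggrp_mult lq rq mod_mult_right_eq)
    then show "h (0, 0, q) \<otimes>\<^bsub>?P\<^esub> Pf k = Pf (qchar a b q * k) \<otimes>\<^bsub>?P\<^esub> h (0, 0, q)"
      using hmul[OF hQc'[OF qc] k1(1)] hmul[OF k1(2) hQc'[OF qc]] hUP by simp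
  qed
  define psi where "psi = (\<lambda>x::int \<times> (int \<times> bool). Pf (fst x) \<otimes>\<^bsub>?P\<^esub> h (0, 0, snd x))"
  have psihom: "psi \<in> hom ?C ?P"
  proof (rule homI)
    fix x assume "x \<in> carrier ?C"
    then show "psi x \<in> carrier ?P" using Pfc hQc by (auto simp: psi_def Csemi_carrier)
  next
    fix x y assume xy: "x \<in> carrier ?C" "y \<in> carrier ?C"
    obtain i q k q' where e: "x = (i, q)" "y = (k, q')" by (cases x, cases y) auto
    have qq: "q \<in> carrier ?Q" "q' \<in> carrier ?Q" using xy e by (auto simp: Csemi_carrier)
    note cs = Pfc hQc[OF qq(1)] hQc[OF qq(2)]
    have "psi x \<otimes>\<^bsub>?P\<^esub> psi y = (Pf i \<otimes>\<^bsub>?P\<^esub> h (0, 0, q)) \<otimes>\<^bsub>?P\<^esub> (Pf k \<otimes>\<^bsub>?P\<^esub> h (0, 0, q'))"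
      by (simp add: psi_def e)
    also have "\<dots> = Pf i \<otimes>\<^bsub>?P\<^esub> ((h (0, 0, q) \<otimes>\<^bsub>?P\<^esub> Pf k) \<otimes>\<^bsub>?P\<^esub> h (0, 0, q'))"
      using cs by (simp add: P.m_assoc)
    also have "\<dots> = Pf i \<otimes>\<^bsub>?P\<^esub> ((Pf (qchar a b q * k) \<otimes>\<^bsub>?P\<^esub> h (0, 0, q)) \<otimes>\<^bsub>?P\<^esub> h (0, 0, q'))"
      by (simp add: hcomm[OF qq(1)])
    also have "\<dots> = (Pf i \<otimes>\<^bsub>?P\<^esub> Pf (qchar a b q * k)) \<otimes>\<^bsub>?P\<^esub> (h (0, 0, q) \<otimes>\<^bsub>?P\<^esub> h (0, 0, q'))"
      using cs by (simp add: P.m_assoc)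
    also have "\<dots> = Pf ((i + qchar a b q * k) mod int m) \<otimes>\<^bsub>?P\<^esub> h (0, 0, q \<otimes>\<^bsub>?Q\<^esub> q')"
      by (simp add: Pfadd Pfm hQmul[OF qq])
    also have "\<dots> = psi (x \<otimes>\<^bsub>?C\<^esub> y)"
      by (simp add: psi_def e Csemi_mult)
    finally show "psi (x \<otimes>\<^bsub>?C\<^esub> y) = psi x \<otimes>\<^bsub>?P\<^esub> psi y" by simp
  qed
  have psisurj: "psi ` carrier ?C = carrier ?P"
  proof
    show "psi ` carrier ?C \<subseteq> carrier ?P" using psihom by (auto simp: hom_def)
  next
    show "carrier ?P \<subseteq> psi ` carrier ?C"
    proof
      fix w assume "w \<in> carrier ?P"
      then obtain g where gc: "g \<in> carrier ?G" and hg: "h g = w" using hs' by (metis imageE)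
      obtain i j q where ge: "g = (i, j, q)" by (cases g) auto
      have qc: "q \<in> carrier ?Q" using gc ge by (auto simp: Ggrp_carrier)
      have "w = Pf (i mod int m) \<otimes>\<^bsub>?P\<^esub> h (0, 0, q)"
        using dec'[of i j q] gc ge hg Pfm by (simp add: Pf_def)
      also have "\<dots> = psi (i mod int m, q)" by (simp add: psi_def)
      finally have "w = psi (i mod int m, q)" .
      moreover have "(i mod int m, q) \<in> carrier ?C" using qc m1 by (simp add: Csemi_carrier)
      ultimately show "w \<in> psi ` carrier ?C" by blast
    qed
  qed
  have finC: "finite (carrier ?C)" by (simp add: Csemi_carrier quat_carrier)
  have "card (carrier ?C) = m * (4 * 2 ^ (n - 2))"
    by (simp add: Csemi_carrier card_cartesian_product card_quat)
  also have "\<dots> = card (carrier ?P)" by (simp add: card_quat K_def)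
  finally have "card (psi ` carrier ?C) = card (carrier ?C)" using psisurj by simp
  then have "inj_on psi (carrier ?C)" using eq_card_imp_inj_on[OF finC] by blast
  then have "psi \<in> iso ?C ?P" using psihom psisurj by (simp add: iso_iff)
  then have "?C \<cong> ?P" by (rule is_isoI)
  then have "?P \<cong> ?C" by (rule group.iso_sym[OF gC])
  then show ?thesis using mt r1 by (simp add: K_def)
qed

theorem lemma1p7:
  fixes n t s m :: nat and r a b :: int
  assumes "n \<ge> 3" and "t \<ge> 1" and "s \<ge> 1" and "odd t" and "odd s" and "coprime t s"
    and "[r ^ s = 1] (mod int t)"
    and "[a ^ 2 = 1] (mod int t)" and "[b ^ 2 = 1] (mod int t)"
    and "m \<ge> 1" and "odd m"
  shows "(\<exists>N. N \<lhd> Ggrp n t s r a b \<and> Ggrp n t s r a b Mod N \<cong> quat (2 ^ (n - 2) * m))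
     \<longleftrightarrow> (m dvd t \<and> [r = 1] (mod int m) \<and> quat (2 ^ (n - 2) * m) \<cong> Csemi m n a b)"
proof
  assume "\<exists>N. N \<lhd> Ggrp n t s r a b \<and> Ggrp n t s r a b Mod N \<cong> quat (2 ^ (n - 2) * m)"
  then obtain N where N: "N \<lhd> Ggrp n t s r a b" and "Ggrp n t s r a b Mod N \<cong> quat (2 ^ (n - 2) * m)" by blast
  then obtain phi where phi: "phi \<in> iso (Ggrp n t s r a b Mod N) (quat (2 ^ (n - 2) * m))"
    unfolding is_iso_def by blast
  let ?pi = "\<lambda>x. N #>\<^bsub>Ggrp n t s r a b\<^esub> x"
  have pih: "?pi \<in> hom (Ggrp n t s r a b) (Ggrp n t s r a b Mod N)" using normal.r_coset_hom_Mod[OF N] .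
  have phih: "phi \<in> hom (Ggrp n t s r a b Mod N) (quat (2 ^ (n - 2) * m))" using phi by (simp add: iso_def)
  have hh: "phi \<circ> ?pi \<in> hom (Ggrp n t s r a b) (quat (2 ^ (n - 2) * m))"
    using pih phih by (auto simp: hom_def Pi_def)
  have "(phi \<circ> ?pi) ` carrier (Ggrp n t s r a b) = phi ` carrier (Ggrp n t s r a b Mod N)"
    by (simp add: carrier_FactGroup image_comp)
  also have "\<dots> = carrier (quat (2 ^ (n - 2) * m))" using phi by (simp add: iso_def bij_betw_def)
  finally have hs: "(phi \<circ> ?pi) ` carrier (Ggrp n t s r a b) = carrier (quat (2 ^ (n - 2) * m))" .
  show "m dvd t \<and> [r = 1] (mod int m) \<and> quat (2 ^ (n - 2) * m) \<cong> Csemi m n a b"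
    using forward_core[OF assms(1-5,7-11) hh hs] .
next
  assume "m dvd t \<and> [r = 1] (mod int m) \<and> quat (2 ^ (n - 2) * m) \<cong> Csemi m n a b"
  then show "\<exists>N. N \<lhd> Ggrp n t s r a b \<and> Ggrp n t s r a b Mod N \<cong> quat (2 ^ (n - 2) * m)"
    using backward[OF assms(1-3,7-10)] by blast
qed

end
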